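(* Let $0<\mu\le L$, $C>0$, and $0<\gamma<1$. Let $f_1,f_2,\dots:\mathbb{R}^d\to\mathbb{R}$ be differentiable functions, each $L$-smooth and $\mu$-strongly convex, whose minimizers $\mathbf{w}^*_t=\arg\min_{\mathbf{w}} f_t(\mathbf{w})$ satisfy $\|\mathbf{w}^*_t\|\le C$ for all $t\ge1$. Define $F_t(\mathbf{w})=\sum_{i=1}^t \frac{1-\gamma}{1-\gamma^t}\gamma^{t-i}f_i(\mathbf{w})$ and $\overline{\mathbf{w}}^*_t=\arg\min_{\mathbf{w}}F_t(\mathbf{w})$. Let $\eta$ satisfy $0<\eta\le\frac{2}{\mu+L}$ and $\eta\mu<1$, and let $E\ge1$ be an integer. Starting from arbitrary $\mathbf{w}_0\in\mathbb{R}^d$, for each $t\ge0$ set $\mathbf{w}_{t,0}=\mathbf{w}_t$, $\mathbf{w}_{t,k+1}=\mathbf{w}_{t,k}-\eta\nabla F_{t+1}(\mathbf{w}_{t,k})$ for $k=0,\dots,E-1$, and $\mathbf{w}_{t+1}=\mathbf{w}_{t,E}$. Let $C'=\left(1+\sqrt{L/\mu}\right)\frac{LC}{\mu}$ and let $\epsilon>0$. If $$E\ge\frac{\ln\left(\frac{\epsilon}{C'(1-\gamma)+\epsilon}\right)}{\ln(1-\eta\mu)},$$ then $\limsup_{t\to\infty}\|\mathbf{w}_t-\overline{\mathbf{w}}^*_t\|\le\epsilon$. Consequently, the number of gradient updates per time step needed to achieve asymptotic tracking error at most $\epsilon$ is $\mathcal{O}(\ln(1/\epsilon))$ as $\ep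silon\to0$.
   Context: A function $f$ is $L$-smooth if $\|\nabla f(\mathbf{x})-\nabla f(\mathbf{y})\|\le L\|\mathbf{x}-\mathbf{y}\|$ for all $\mathbf{x},\mathbf{y}$, and $\mu$-strongly convex if $f(\mathbf{y})\ge f(\mathbf{x})+\nabla f(\mathbf{x})^\top(\mathbf{y}-\mathbf{x})+\frac{\mu}{2}\|\mathbf{y}-\mathbf{x}\|^2$ for all $\mathbf{x},\mathbf{y}$. The quantity $\limsup_{t\to\infty}\|\mathbf{w}_t-\overline{\mathbf{w}}^*_t\|$ is called the asymptotic tracking error. *)

theory Defs
  imports "HOL-Analysis.Analysis" "HOL-Library.Landau_Symbols"
begin

definition smooth_grad :: "real \<Rightarrow> ('a::euclidean_space \<Rightarrow> 'a) \<Rightarrow> bool" where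
  "smooth_grad L g \<longleftrightarrow> (\<forall>x y. norm (g x - g y) \<le> L * norm (x - y))"

definition strongly_convex_grad ::
  "real \<Rightarrow> ('a::euclidean_space \<Rightarrow> real) \<Rightarrow> ('a \<Rightarrow> 'a) \<Rightarrow> bool" where
  "strongly_convex_grad \<mu> f g \<longleftrightarrow>
     (\<forall>x y. f y \<ge> f x + inner (g x) (y - x) + \<mu> / 2 * (norm (y - x))^2)"

definition Fdisc :: "real \<Rightarrow> (nat \<Rightarrow> 'a \<Rightarrow> real) \<Rightarrow> nat \<Rightarrow> 'a \<Rightarrow> real" where
  "Fdisc \<gamma> f t w = (\<Sum>i=1..t. (1 - \<gamma>) / (1 - \<gamma>^t) * \<gamma>^(t - i) * f i w)"

definition gradF :: "real \<Rightarrow> (nat \<Rightarrow> 'a \<Rightarrow> 'a::real_vector) \<Rightarrow> nat \<Rightarrow> 'a \<Rightarrow> 'a" where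
  "gradF \<gamma> g t w = (\<Sum>i=1..t. ((1 - \<gamma>) / (1 - \<gamma>^t) * \<gamma>^(t - i)) *\<^sub>R g i w)"

text \<open>The argmin of a function (used only where it is unique).\<close>
definition argmin :: "('a \<Rightarrow> real) \<Rightarrow> 'a" where
  "argmin h = (THE w. \<forall>v. h w \<le> h v)"

primrec iter_w :: "real \<Rightarrow> (nat \<Rightarrow> 'a \<Rightarrow> 'a::real_vector) \<Rightarrow> real \<Rightarrow> nat \<Rightarrow> 'a \<Rightarrow> nat \<Rightarrow> 'a" where
  "iter_w \<gamma> g \<eta> E w0 0 = w0"
| "iter_w \<gamma> g \<eta> E w0 (Suc t) =
     ((\<lambda>x. x - \<eta> *\<^sub>R gradF \<gamma> g (Suc t) x) ^^ E) (iter_w \<gamma> g \<eta> E w0 t)"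

end

theory Submission
  imports Defs "HOL-Real_Asymp.Real_Asymp"
begin


definition Qp :: "real \<Rightarrow> real \<Rightarrow> ('a::real_inner \<Rightarrow> real) \<Rightarrow> ('a \<Rightarrow> 'a) \<Rightarrow> bool" where
"Qp \<mu> L F G \<longleftrightarrow> (\<forall>x y. \<mu>/2 * (norm (y-x))^2 \<le> F y - F x - inner (G x) (y-x)
    \<and> F y - F x - inner (G x) (y-x) \<le> L/2 * (norm (y-x))^2)"

lemma Qp_mono:
  assumes "Qp \<mu> L F G" shows "inner (G y - G x) (y - x) \<ge> \<mu> * (norm (y-x))^2"
proof -
  have a: "\<mu>/2 * (norm (y-x))^2 \<le> F y - F x - inner (G x) (y-x)"
    and b: "\<mu>/2 * (norm (x-y))^2 \<le> F x - F y - inner (G y) (x-y)"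
    using assms unfolding Qp_def by blast+
  have "norm (x-y) = norm (y-x)" by (rule norm_minus_commute)
  moreover have "inner (G y) (x-y) = - inner (G y) (y-x)"
    by (metis inner_minus_right minus_diff_eq)
  ultimately show ?thesis using a b by (simp add: inner_diff_left)
qed

lemma Qp_coco:
  assumes Q: "Qp \<mu> L F G" and mu: "0 < \<mu>" "\<mu> \<le> L"
  shows "(L+\<mu>) * inner (G y - G x) (y-x) \<ge> (norm (G y - G x))^2 + \<mu>*L*(norm(y-x))^2"
proof -
  define D where "D = (\<lambda>x y. F y - F x - inner (G x) (y-x) - \<mu>/2 * (norm (y-x))^2)"
  define Gp where "Gp = (\<lambda>x. G x - \<mu> *\<^sub>R x)"
  have Dlo: "D a b \<ge> 0" for a b using Q unfolding Qp_def D_def by auto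
  have Dhi: "D a b \<le> (L-\<mu>)/2 * (norm (b-a))^2" for a b using Q unfolding Qp_def D_def
    by (auto simp: algebra_simps)
  have key: "D a b - D a c + D b c = - inner (Gp b - Gp a) (c - b)" for a b c
    unfolding D_def Gp_def
    by (simp add: inner_diff_left inner_diff_right power2_norm_eq_inner algebra_simps inner_commute)
  have lb: "D a b \<ge> (r - (L-\<mu>)*r^2/2) * (norm (Gp b - Gp a))^2" if s: "r > 0" for a b r
  proof -
    define v where "v = Gp b - Gp a"
    define c where "c = b - r *\<^sub>R v"
    have "D a b = D a c - D b c - inner v (c - b)" using key[of a b c] unfolding v_def by simp
    also have "inner v (c - b) = - r * (norm v)^2" unfolding c_def
      by (simp add: power2_norm_eq_inner)
    finally have e: "D a b = D a c - D b c + r * (norm v)^2" by simp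
    have "D b c \<le> (L-\<mu>)/2 * (r * norm v)^2" using Dhi[of b c] unfolding c_def using s by simp
    then have h: "D b c \<le> (L-\<mu>)*r^2/2*(norm v)^2" by (simp add: power_mult_distrib)
    show ?thesis using e Dlo[of a c] h unfolding v_def[symmetric] left_diff_distrib by linarith
  qed
  define v where "v = Gp y - Gp x"
  have sum: "D x y + D y x = inner v (y - x)"
    unfolding D_def v_def Gp_def
    by (simp add: inner_diff_left inner_diff_right power2_norm_eq_inner algebra_simps inner_commute norm_minus_commute)
  have nv: "norm (Gp x - Gp y) = norm v" unfolding v_def by (rule norm_minus_commute)
  have main: "(L-\<mu>) * inner v (y-x) \<ge> (norm v)^2"
  proof (cases "L = \<mu>")
    case True
    have "D x y + D y x \<ge> 2 * (norm v)^2 * s" if "s > 0" for s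
      using lb[OF that, of x y] lb[OF that, of y x] True nv unfolding v_def[symmetric]
      by (simp add: algebra_simps)
    moreover have "D x y + D y x \<le> 0" using Dhi[of x y] Dhi[of y x] True by simp
    ultimately have "(norm v)^2 * s \<le> 0" if "s>0" for s using that by force
    from this[of 1] have "norm v = 0" by simp
    then show ?thesis using True by simp
  next
    case False
    then have pos: "L - \<mu> > 0" using mu by simp
    let ?s = "1/(L-\<mu>)"
    define k where "k = (?s - (L-\<mu>)*?s^2/2)"
    have "k*(norm v)^2 \<le> D x y" "k*(norm v)^2 \<le> D y x"
      using lb[of ?s x y] lb[of ?s y x] pos nv unfolding v_def[symmetric] k_def by simp_all
    then have h2: "D x y + D y x \<ge> 2*k*(norm v)^2" by linarith
    have a: "(L-\<mu>)*?s^2 = ?s" using pos by (simp add: power2_eq_square)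
    have "2*k = ?s" unfolding k_def a using pos by (simp add: field_simps)
    then have "D x y + D y x \<ge> ?s*(norm v)^2" using h2 by simp
    then have "inner v (y-x) \<ge> (norm v)^2 / (L-\<mu>)" using sum by simp
    then show ?thesis using pos by (simp add: field_simps)
  qed
  have v_eq: "v = (G y - G x) - \<mu> *\<^sub>R (y - x)" unfolding v_def Gp_def by (simp add: algebra_simps)
  define g where "g = G y - G x"
  define d where "d = y - x"
  have i1: "inner v d = inner g d - \<mu> * (norm d)^2" unfolding v_eq g_def[symmetric] d_def[symmetric]
    by (simp add: inner_diff_left power2_norm_eq_inner)
  have i2: "(norm v)^2 = (norm g)^2 - 2*\<mu>*inner g d + \<mu>^2 * (norm d)^2"
  proof -
    have "(norm (g - \<mu> *\<^sub>R d))^2 = (norm g)^2 - \<mu> * inner g d - \<mu> * inner d g + \<mu>*\<mu>*(norm d)^2"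
      by (simp add: power2_norm_eq_inner inner_diff_left inner_diff_right algebra_simps)
    moreover have "inner d g = inner g d" by (rule inner_commute)
    ultimately show ?thesis unfolding v_eq g_def[symmetric] d_def[symmetric] by (simp add: power2_eq_square algebra_simps)
  qed
  have "(L-\<mu>) * (inner g d - \<mu> * (norm d)^2) \<ge> (norm g)^2 - 2*\<mu>*inner g d + \<mu>^2 * (norm d)^2"
    using main i1 i2 unfolding d_def by simp
  then have "(L+\<mu>) * inner g d \<ge> (norm g)^2 + \<mu>*L*(norm d)^2"
    by (simp add: algebra_simps power2_eq_square)
  then show ?thesis unfolding g_def d_def .
qed

lemma Qp_contract:
  assumes Q: "Qp \<mu> L F G" and mu: "0 < \<mu>" "\<mu> \<le> L" and eta: "0 < \<eta>" "\<eta> \<le> 2/(\<mu>+L)" "\<eta>*\<mu> < 1"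
  shows "norm ((y - \<eta> *\<^sub>R G y) - (x - \<eta> *\<^sub>R G x)) \<le> (1 - \<eta>*\<mu>) * norm (y - x)"
proof -
  define g where "g = G y - G x"
  define d where "d = y - x"
  have co: "(L+\<mu>) * inner g d \<ge> (norm g)^2 + \<mu>*L*(norm d)^2"
    using Qp_coco[OF Q mu, of y x] unfolding g_def d_def .
  have mo: "inner g d \<ge> \<mu> * (norm d)^2" using Qp_mono[OF Q, of y x] unfolding g_def d_def by simp
  have cs: "inner g d \<le> norm g * norm d" by (rule norm_cauchy_schwarz)
  have ng: "norm g \<ge> \<mu> * norm d"
  proof (cases "norm d = 0")
    case True then show ?thesis by simp
  next
    case False
    then have "norm d > 0" by simp
    moreover have "\<mu> * norm d * norm d \<le> norm g * norm d" using mo cs by (simp add: power2_eq_square)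
    ultimately show ?thesis by simp
  qed
  have ng2: "(norm g)^2 \<ge> \<mu>^2 * (norm d)^2"
    using ng mu by (metis mult_nonneg_nonneg norm_ge_zero power_mono power_mult_distrib less_imp_le)
  have e: "(y - \<eta> *\<^sub>R G y) - (x - \<eta> *\<^sub>R G x) = d - \<eta> *\<^sub>R g" unfolding d_def g_def
    by (simp add: algebra_simps)
  have sq: "(norm (d - \<eta> *\<^sub>R g))^2 = (norm d)^2 - 2*\<eta>*inner g d + \<eta>^2 * (norm g)^2"
  proof -
    have "(norm (d - \<eta> *\<^sub>R g))^2 = (norm d)^2 - \<eta> * inner g d - \<eta> * inner d g + \<eta>*\<eta>*(norm g)^2"
      by (simp add: power2_norm_eq_inner inner_diff_left inner_diff_right algebra_simps)
    moreover have "inner d g = inner g d" by (rule inner_commute)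
    ultimately show ?thesis by (simp add: power2_eq_square algebra_simps)
  qed
  have Lmu: "L + \<mu> > 0" using mu by simp
  have c2: "\<eta> * (L+\<mu>) \<le> 2" using eta Lmu by (simp add: field_simps)
  have "(L+\<mu>) * (norm (d - \<eta> *\<^sub>R g))^2 \<le> (L+\<mu>) * ((1 - \<eta>*\<mu>) * norm d)^2"
  proof -
    have "(L+\<mu>) * (norm (d - \<eta> *\<^sub>R g))^2 = (L+\<mu>)*(norm d)^2 - 2*\<eta>*((L+\<mu>)*inner g d) + \<eta>^2 *(L+\<mu>)* (norm g)^2"
      unfolding sq by (simp add: algebra_simps)
    also have "\<dots> \<le> (L+\<mu>)*(norm d)^2 - 2*\<eta>*((norm g)^2 + \<mu>*L*(norm d)^2) + \<eta>^2 *(L+\<mu>)* (norm g)^2"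
      using co eta by simp
    also have "\<dots> = (L+\<mu>)*(norm d)^2 - 2*\<eta>*\<mu>*L*(norm d)^2 - \<eta>*(2 - \<eta>*(L+\<mu>))*(norm g)^2"
      by (simp add: algebra_simps power2_eq_square)
    also have "\<dots> \<le> (L+\<mu>)*(norm d)^2 - 2*\<eta>*\<mu>*L*(norm d)^2 - \<eta>*(2 - \<eta>*(L+\<mu>))*(\<mu>^2 * (norm d)^2)"
      using ng2 c2 eta by (simp add: mult_left_mono)
    also have "\<dots> = (L+\<mu>) * ((1 - \<eta>*\<mu>) * norm d)^2"
      by (simp add: algebra_simps power2_eq_square)
    finally show ?thesis .
  qed
  then have s1: "(norm (d - \<eta> *\<^sub>R g))^2 \<le> ((1 - \<eta>*\<mu>) * norm d)^2" using Lmu by simp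
  have s2: "(1 - \<eta>*\<mu>) * norm d \<ge> 0" using eta by simp
  show ?thesis using power2_le_imp_le[OF s1 s2] unfolding e d_def .
qed



lemma descent:
  fixes f :: "'a::euclidean_space \<Rightarrow> real"
  assumes dv: "\<And>x. (f has_derivative (\<lambda>h. inner (g x) h)) (at x)" and sm: "smooth_grad L g"
  shows "f y - f x - inner (g x) (y-x) \<le> L/2 * (norm (y-x))^2"
proof -
  define d where "d = y - x"
  define h where "h = (\<lambda>s. f (x + s *\<^sub>R d) - s * inner (g x) d - L/2 * s^2 * (norm d)^2)"
  have fd: "((\<lambda>s. f (x + s *\<^sub>R d)) has_real_derivative inner (g (x + s *\<^sub>R d)) d) (at s)" for s
  proof -
    have lin: "((\<lambda>s. x + s *\<^sub>R d) has_derivative (\<lambda>u. u *\<^sub>R d)) (at s)"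
      by (auto intro!: derivative_eq_intros)
    have e: "(\<lambda>u. inner (g (x + s *\<^sub>R d)) (u *\<^sub>R d)) = (*) (inner (g (x + s *\<^sub>R d)) d)"
      by (auto simp: fun_eq_iff)
    show ?thesis unfolding has_field_derivative_def
      using has_derivative_compose[OF lin dv] unfolding e .
  qed
  have hd: "(h has_real_derivative (inner (g (x + s *\<^sub>R d)) d - inner (g x) d - L * s * (norm d)^2)) (at s)" for s
    unfolding h_def
    by (rule derivative_eq_intros fd | simp)+
  have np: "inner (g (x + s *\<^sub>R d)) d - inner (g x) d - L * s * (norm d)^2 \<le> 0" if "0 \<le> s" for s
  proof -
    have "inner (g (x + s *\<^sub>R d)) d - inner (g x) d = inner (g (x + s *\<^sub>R d) - g x) d"
      by (simp add: inner_diff_left)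
    also have "\<dots> \<le> norm (g (x + s *\<^sub>R d) - g x) * norm d" by (rule norm_cauchy_schwarz)
    also have "\<dots> \<le> L * norm ((x + s *\<^sub>R d) - x) * norm d"
    proof -
      have "norm (g (x + s *\<^sub>R d) - g x) \<le> L * norm ((x + s *\<^sub>R d) - x)"
        using sm unfolding smooth_grad_def by blast
      then show ?thesis by (rule mult_right_mono) simp
    qed
    also have "\<dots> = L * s * (norm d)^2" using that by (simp add: power2_eq_square)
    finally show ?thesis by simp
  qed
  have "h 1 \<le> h 0"
  proof (rule DERIV_nonpos_imp_nonincreasing[of 0 1 h])
    fix s :: real assume "0 \<le> s" "s \<le> 1"
    then show "\<exists>y. (h has_real_derivative y) (at s) \<and> y \<le> 0" using hd[of s] np[of s] by blast
  qed simp
  then show ?thesis unfolding h_def d_def by simp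
qed



lemma geom_sum_aux:
  fixes \<gamma> :: real
  shows "(\<Sum>i=1..t. \<gamma>^(t-i)) * (1 - \<gamma>) = 1 - \<gamma>^t"
proof (induction t)
  case 0 then show ?case by simp
next
  case (Suc t)
  have "(\<Sum>i=1..Suc t. \<gamma>^(Suc t-i)) = (\<Sum>i=1..t. \<gamma>^(Suc t-i)) + 1"
    by simp
  also have "(\<Sum>i=1..t. \<gamma>^(Suc t-i)) = \<gamma> * (\<Sum>i=1..t. \<gamma>^(t-i))"
    unfolding sum_distrib_left
    by (rule sum.cong) (auto simp: Suc_diff_le)
  finally have eq: "(\<Sum>i=1..Suc t. \<gamma>^(Suc t-i)) = \<gamma> * (\<Sum>i=1..t. \<gamma>^(t-i)) + 1" .
  have "(\<gamma> * (\<Sum>i=1..t. \<gamma>^(t-i)) + 1) * (1-\<gamma>) = \<gamma> * ((\<Sum>i=1..t. \<gamma>^(t-i)) * (1-\<gamma>)) + (1-\<gamma>)"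
    by (simp add: algebra_simps)
  then show ?case unfolding eq Suc.IH by (simp add: algebra_simps)
qed

lemma weights_sum:
  fixes \<gamma> :: real
  assumes "0 < \<gamma>" "\<gamma> < 1" "t \<ge> 1"
  shows "(\<Sum>i=1..t. (1 - \<gamma>) / (1 - \<gamma>^t) * \<gamma>^(t-i)) = 1"
proof -
  have "\<gamma>^t < 1" using assms by (simp add: power_less_one_iff)
  then have "1 - \<gamma>^t \<noteq> 0" by simp
  have g1: "1 - \<gamma> \<noteq> 0" using assms by simp
  have S: "(\<Sum>i=1..t. \<gamma>^(t-i)) = (1 - \<gamma>^t) / (1 - \<gamma>)"
    using geom_sum_aux[of \<gamma> t] g1 by (simp add: field_simps)
  have "(\<Sum>i=1..t. (1 - \<gamma>) / (1 - \<gamma>^t) * \<gamma>^(t-i)) = (1 - \<gamma>) / (1 - \<gamma>^t) * (\<Sum>i=1..t. \<gamma>^(t-i))"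
    by (simp add: sum_distrib_left)
  also have "\<dots> = 1" unfolding S using g1 \<open>1 - \<gamma>^t \<noteq> 0\<close> by simp
  finally show ?thesis .
qed

lemma Qp_sum:
  assumes fin: "finite I" and nn: "\<And>i. i \<in> I \<Longrightarrow> lam i \<ge> 0" and s1: "(\<Sum>i\<in>I. lam i) = 1"
    and Q: "\<And>i. i \<in> I \<Longrightarrow> Qp \<mu> L (f i) (g i)"
  shows "Qp \<mu> L (\<lambda>w. \<Sum>i\<in>I. lam i * f i w) (\<lambda>w. \<Sum>i\<in>I. lam i *\<^sub>R g i w)"
  unfolding Qp_def
proof (intro allI conjI)
  fix x y
  have sc: "(\<Sum>i\<in>I. lam i * c) = c" for c by (metis s1 sum_distrib_right mult_1)
  have D: "(\<Sum>i\<in>I. lam i * f i y) - (\<Sum>i\<in>I. lam i * f i x) - inner (\<Sum>i\<in>I. lam i *\<^sub>R g i x) (y - x)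
     = (\<Sum>i\<in>I. lam i * (f i y - f i x - inner (g i x) (y - x)))"
    by (simp add: inner_sum_left sum_subtractf[symmetric] algebra_simps)
  have "\<mu>/2 * (norm (y-x))^2 = (\<Sum>i\<in>I. lam i * (\<mu>/2 * (norm (y-x))^2))"
    by (rule sc[symmetric])
  also have "\<dots> \<le> (\<Sum>i\<in>I. lam i * (f i y - f i x - inner (g i x) (y - x)))"
    by (rule sum_mono, rule mult_left_mono) (use Q nn in \<open>auto simp: Qp_def\<close>)
  finally show "\<mu>/2 * (norm (y-x))^2 \<le> (\<Sum>i\<in>I. lam i * f i y) - (\<Sum>i\<in>I. lam i * f i x) - inner (\<Sum>i\<in>I. lam i *\<^sub>R g i x) (y - x)"
    unfolding D .
  have "(\<Sum>i\<in>I. lam i * (f i y - f i x - inner (g i x) (y - x))) \<le> (\<Sum>i\<in>I. lam i * (L/2 * (norm (y-x))^2))"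
    by (rule sum_mono, rule mult_left_mono) (use Q nn in \<open>auto simp: Qp_def\<close>)
  also have "\<dots> = L/2 * (norm (y-x))^2"
    by (rule sc)
  finally show "(\<Sum>i\<in>I. lam i * f i y) - (\<Sum>i\<in>I. lam i * f i x) - inner (\<Sum>i\<in>I. lam i *\<^sub>R g i x) (y - x) \<le> L/2 * (norm (y-x))^2"
    unfolding D .
qed

lemma Qp_argmin:
  fixes F :: "'a::euclidean_space \<Rightarrow> real"
  assumes Q: "Qp \<mu> L F G" and mu: "0 < \<mu>" "\<mu> \<le> L"
  shows "\<exists>m. G m = 0 \<and> argmin F = m \<and> (\<forall>v. F m \<le> F v) \<and> (\<forall>w. (\<forall>v. F w \<le> F v) \<longrightarrow> w = m)"
proof -
  define \<eta> where "\<eta> = 1/(\<mu>+L)"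
  have e1: "0 < \<eta>" "\<eta> \<le> 2/(\<mu>+L)" "\<eta>*\<mu> < 1" using mu unfolding \<eta>_def by (auto simp: field_simps)
  define T where "T = (\<lambda>x. x - \<eta> *\<^sub>R G x)"
  have "\<exists>!x. T x = x"
  proof (rule banach_fix_type)
    show "0 \<le> 1 - \<eta>*\<mu>" "1 - \<eta>*\<mu> < 1" using e1 mu by auto
    show "\<forall>x y. dist (T x) (T y) \<le> (1 - \<eta>*\<mu>) * dist x y"
      unfolding T_def dist_norm using Qp_contract[OF Q mu e1] by blast
  qed
  then obtain m where "T m = m" by blast
  then have Gm: "G m = 0" using e1 unfolding T_def by simp
  have lo: "F v \<ge> F m + \<mu>/2 * (norm (v - m))^2" for v
    using Q Gm unfolding Qp_def by (metis add.commute diff_ge_0_iff_ge inner_zero_left le_diff_eq diff_zero)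
  have mn: "\<forall>v. F m \<le> F v"
    using lo mu by (smt (verit) divide_pos_pos mult_nonneg_nonneg zero_le_power2)
  have un: "\<forall>w. (\<forall>v. F w \<le> F v) \<longrightarrow> w = m"
  proof (intro allI impI)
    fix w assume "\<forall>v. F w \<le> F v"
    then have "F w \<le> F m" by blast
    with lo[of w] have "\<mu>/2 * (norm (w - m))^2 \<le> 0" by simp
    then have "(norm (w - m))^2 \<le> 0" using mu by (simp add: mult_le_0_iff)
    then show "w = m" by simp
  qed
  have "argmin F = m" unfolding argmin_def
    by (rule the_equality[where P = "\<lambda>w. \<forall>v. F w \<le> F v", OF mn]) (use un in blast)
  then show ?thesis using Gm mn un by blast
qed



lemma wsum_sq:
  fixes z :: "'i \<Rightarrow> 'a::real_inner"
  assumes fin: "finite I" and s1: "(\<Sum>i\<in>I. lam i) = 1"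
  shows "(\<Sum>i\<in>I. lam i * (norm (w - z i))^2) = (norm w)^2 - 2 * inner w (\<Sum>i\<in>I. lam i *\<^sub>R z i) + (\<Sum>i\<in>I. lam i * (norm (z i))^2)"
proof -
  have e: "(norm (w - z i))^2 = (norm w)^2 - 2 * inner w (z i) + (norm (z i))^2" for i
  proof -
    have "(norm (w - z i))^2 = (norm w)^2 - inner w (z i) - inner (z i) w + (norm (z i))^2"
      by (simp add: power2_norm_eq_inner inner_diff_left inner_diff_right algebra_simps)
    moreover have "inner (z i) w = inner w (z i)" by (rule inner_commute)
    ultimately show ?thesis by simp
  qed
  have sc: "(\<Sum>i\<in>I. lam i * c) = c" for c by (metis s1 sum_distrib_right mult_1)
  have "(\<Sum>i\<in>I. lam i * (norm (w - z i))^2) = (\<Sum>i\<in>I. lam i * (norm w)^2) - 2 * (\<Sum>i\<in>I. lam i * inner w (z i)) + (\<Sum>i\<in>I. lam i * (norm (z i))^2)"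
    unfolding e by (simp add: algebra_simps sum.distrib sum_subtractf sum_distrib_left)
  also have "(\<Sum>i\<in>I. lam i * inner w (z i)) = inner w (\<Sum>i\<in>I. lam i *\<^sub>R z i)"
    by (simp add: inner_sum_right)
  finally show ?thesis using sc by simp
qed

lemma min_norm:
  fixes f :: "'i \<Rightarrow> 'a::euclidean_space \<Rightarrow> real"
  assumes fin: "finite I" and nn: "\<And>i. i \<in> I \<Longrightarrow> lam i \<ge> 0" and s1: "(\<Sum>i\<in>I. lam i) = 1"
    and Q: "\<And>i. i \<in> I \<Longrightarrow> Qp \<mu> L (f i) (g i)"
    and z: "\<And>i. i \<in> I \<Longrightarrow> g i (z i) = 0" "\<And>i. i \<in> I \<Longrightarrow> norm (z i) \<le> C"
    and m: "\<And>v. (\<Sum>i\<in>I. lam i * f i m) \<le> (\<Sum>i\<in>I. lam i * f i v)"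
    and mu: "0 < \<mu>" "\<mu> \<le> L"
  shows "\<mu> * (norm m)^2 \<le> L * C^2"
proof -
  define zb where "zb = (\<Sum>i\<in>I. lam i *\<^sub>R z i)"
  define S where "S = (\<Sum>i\<in>I. lam i * (norm (z i))^2)"
  have sc: "(\<Sum>i\<in>I. lam i * c) = c" for c by (metis s1 sum_distrib_right mult_1)
  have lo: "f i m - f i (z i) \<ge> \<mu>/2 * (norm (m - z i))^2" if "i \<in> I" for i
    using Q[OF that] z(1)[OF that] unfolding Qp_def by (metis diff_zero inner_zero_left)
  have hi: "f i zb - f i (z i) \<le> L/2 * (norm (zb - z i))^2" if "i \<in> I" for i
    using Q[OF that] z(1)[OF that] unfolding Qp_def by (metis diff_zero inner_zero_left)
  have "\<mu>/2 * (\<Sum>i\<in>I. lam i * (norm (m - z i))^2) = (\<Sum>i\<in>I. lam i * (\<mu>/2 * (norm (m - z i))^2))"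
    by (simp add: sum_distrib_left algebra_simps)
  also have "\<dots> \<le> (\<Sum>i\<in>I. lam i * (f i m - f i (z i)))"
    by (rule sum_mono, rule mult_left_mono) (use lo nn in auto)
  also have "\<dots> = (\<Sum>i\<in>I. lam i * f i m) - (\<Sum>i\<in>I. lam i * f i (z i))"
    by (simp add: algebra_simps sum_subtractf)
  also have "\<dots> \<le> (\<Sum>i\<in>I. lam i * f i zb) - (\<Sum>i\<in>I. lam i * f i (z i))"
    using m[of zb] by simp
  also have "\<dots> = (\<Sum>i\<in>I. lam i * (f i zb - f i (z i)))"
    by (simp add: algebra_simps sum_subtractf)
  also have "\<dots> \<le> (\<Sum>i\<in>I. lam i * (L/2 * (norm (zb - z i))^2))"
    by (rule sum_mono, rule mult_left_mono) (use hi nn in auto)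
  also have "\<dots> = L/2 * (\<Sum>i\<in>I. lam i * (norm (zb - z i))^2)"
    by (simp add: sum_distrib_left algebra_simps)
  finally have ineq: "\<mu> * (\<Sum>i\<in>I. lam i * (norm (m - z i))^2) \<le> L * (\<Sum>i\<in>I. lam i * (norm (zb - z i))^2)"
    by simp
  have w1: "(\<Sum>i\<in>I. lam i * (norm (m - z i))^2) = (norm m)^2 - 2 * inner m zb + S"
    unfolding zb_def S_def by (rule wsum_sq[OF fin s1])
  have w2: "(\<Sum>i\<in>I. lam i * (norm (zb - z i))^2) = S - (norm zb)^2"
    unfolding S_def using wsum_sq[OF fin s1, of zb z] unfolding zb_def[symmetric]
    by (simp add: power2_norm_eq_inner)
  have SC: "S \<le> C^2"
  proof -
    have "S \<le> (\<Sum>i\<in>I. lam i * C^2)" unfolding S_def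
      by (rule sum_mono, rule mult_left_mono) (use z(2) nn in \<open>auto intro: power_mono\<close>)
    then show ?thesis using sc by simp
  qed
  have rC: "norm zb \<le> C"
  proof -
    have "norm zb \<le> (\<Sum>i\<in>I. norm (lam i *\<^sub>R z i))" unfolding zb_def by (rule norm_sum)
    also have "\<dots> \<le> (\<Sum>i\<in>I. lam i * C)"
      by (rule sum_mono) (use z(2) nn in \<open>auto intro: mult_left_mono\<close>)
    finally show ?thesis using sc by simp
  qed
  have cs: "inner m zb \<le> norm m * norm zb" by (rule norm_cauchy_schwarz)
  define a where "a = norm m"
  define r where "r = norm zb"
  have a0: "a \<ge> 0" "r \<ge> 0" unfolding a_def r_def by auto
  have key: "\<mu>*a^2 - 2*\<mu>*a*r + L*r^2 \<le> (L-\<mu>)*C^2"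
  proof -
    have "\<mu>*(a^2 - 2*inner m zb + S) \<le> L*(S - r^2)" using ineq w1 w2 unfolding a_def r_def by simp
    moreover have "\<mu> * inner m zb \<le> \<mu> * (a*r)" using cs mu unfolding a_def r_def by simp
    moreover have "(L-\<mu>)*S \<le> (L-\<mu>)*C^2" using SC mu by (simp add: mult_left_mono)
    ultimately show ?thesis by (simp add: algebra_simps)
  qed
  show ?thesis
  proof (cases "L = \<mu>")
    case True
    then have "\<mu>*(a-r)^2 \<le> 0" using key by (simp add: power2_eq_square algebra_simps)
    then have "a = r" using mu by (simp add: mult_le_0_iff)
    then have "a \<le> C" using rC unfolding r_def by simp
    then have "a^2 \<le> C^2" using a0 by (simp add: power_mono)
    then show ?thesis using True mu unfolding a_def by simp
  next
    case False
    then have pos: "L - \<mu> > 0" using mu by simp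
    have "L*(\<mu>*a^2 - 2*\<mu>*a*r + L*r^2) = \<mu>*(L-\<mu>)*a^2 + (\<mu>*a - L*r)^2"
      by (simp add: power2_eq_square algebra_simps)
    moreover have "L*(\<mu>*a^2 - 2*\<mu>*a*r + L*r^2) \<le> L*((L-\<mu>)*C^2)" using key mu by (simp add: mult_left_mono)
    ultimately have "(L-\<mu>)*(\<mu>*a^2) \<le> (L-\<mu>)*(L*C^2)"
      by (smt (verit) zero_le_power2 mult.assoc mult.commute)
    then show ?thesis using pos unfolding a_def by simp
  qed
qed


lemma bigo_part:
  fixes K c :: real
  assumes "K > 0"
  shows "(\<lambda>e. ln (e/(K+e)) / c) \<in> O[at_right 0](\<lambda>e. ln(1/e))"
proof -
  have "(\<lambda>e. ln (e/(K+e))) \<in> O[at_right 0](\<lambda>e. ln(1/e))"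
    using assms by real_asymp
  then show ?thesis by (simp add: divide_inverse landau_o.big.mult_right)
qed


lemma rec_bound:
  fixes e d :: "nat \<Rightarrow> real"
  assumes r: "0 \<le> \<rho>" "\<rho> < 1" and rec: "\<And>t. e (Suc t) \<le> \<rho> * (e t + d t)"
    and dv: "\<And>\<delta>. \<delta> > 0 \<Longrightarrow> eventually (\<lambda>t. d t \<le> K + \<delta>) sequentially"
    and dp: "\<delta> > 0" and K0: "K \<ge> 0"
  shows "eventually (\<lambda>t. e t \<le> \<rho>*K/(1-\<rho>) + \<delta>) sequentially"
proof -
  define \<delta>1 where "\<delta>1 = \<delta>*(1-\<rho>)/2"
  have d1: "\<delta>1 > 0" unfolding \<delta>1_def using r dp by simp
  obtain N where N: "\<And>t. t \<ge> N \<Longrightarrow> d t \<le> K + \<delta>1"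
    using dv[OF d1] unfolding eventually_sequentially by blast
  define B where "B = K + \<delta>1"
  have ind: "e (N+k) \<le> \<rho>^k * e N + \<rho>*B/(1-\<rho>)" for k
  proof (induction k)
    case 0
    have "0 \<le> \<rho>*B/(1-\<rho>)" using r K0 d1 unfolding B_def by simp
    then show ?case by simp
  next
    case (Suc k)
    have "e (N + Suc k) \<le> \<rho> * (e (N+k) + d (N+k))" using rec[of "N+k"] by simp
    also have "\<dots> \<le> \<rho> * ((\<rho>^k * e N + \<rho>*B/(1-\<rho>)) + B)"
      using Suc.IH N[of "N+k"] r unfolding B_def by (intro mult_left_mono add_mono) auto
    also have "\<dots> = \<rho>^(Suc k) * e N + \<rho>*B/(1-\<rho>)"
      using r by (simp add: field_simps)
    finally show ?case .
  qed
  have "(\<lambda>k. \<rho>^k * e N) \<longlonglongrightarrow> 0 * e N"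
    by (intro tendsto_mult tendsto_const LIMSEQ_power_zero) (use r in auto)
  then have "eventually (\<lambda>k. \<rho>^k * e N < \<delta>/2) sequentially"
    using dp order_tendstoD(2)[of "\<lambda>k. \<rho>^k * e N" 0 sequentially "\<delta>/2"] by simp
  then obtain M where M: "\<And>k. k \<ge> M \<Longrightarrow> \<rho>^k * e N < \<delta>/2"
    unfolding eventually_sequentially by blast
  have b2: "\<rho>*B/(1-\<rho>) \<le> \<rho>*K/(1-\<rho>) + \<delta>/2"
  proof -
    have "\<rho>*B/(1-\<rho>) = \<rho>*K/(1-\<rho>) + \<rho>*(\<delta>/2)"
      unfolding B_def \<delta>1_def using r by (simp add: field_simps)
    also have "\<rho>*(\<delta>/2) \<le> \<delta>/2" using r dp by (simp add: mult_left_le_one_le)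
    finally show ?thesis by simp
  qed
  show ?thesis unfolding eventually_sequentially
  proof (intro exI allI impI)
    fix t assume "N + M \<le> t"
    then have t: "t = N + (t - N)" "t - N \<ge> M" by auto
    have "e t \<le> \<rho>^(t-N) * e N + \<rho>*B/(1-\<rho>)" using ind[of "t-N"] t(1) by simp
    then show "e t \<le> \<rho>*K/(1-\<rho>) + \<delta>" using M[OF t(2)] b2 by simp
  qed
qed


lemma pow_contract:
  fixes G :: "'a::euclidean_space \<Rightarrow> 'a"
  assumes Q: "Qp \<mu> L F G" and mu: "0 < \<mu>" "\<mu> \<le> L" and eta: "0 < \<eta>" "\<eta> \<le> 2/(\<mu>+L)" "\<eta>*\<mu> < 1"
    and Gm: "G m = 0"
  shows "norm (((\<lambda>x. x - \<eta> *\<^sub>R G x) ^^ n) w - m) \<le> (1 - \<eta>*\<mu>)^n * norm (w - m)"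
proof (induction n)
  case 0 then show ?case by simp
next
  case (Suc n)
  define y where "y = ((\<lambda>x. x - \<eta> *\<^sub>R G x) ^^ n) w"
  have "norm (((\<lambda>x. x - \<eta> *\<^sub>R G x) ^^ Suc n) w - m) = norm ((y - \<eta> *\<^sub>R G y) - (m - \<eta> *\<^sub>R G m))"
    unfolding y_def using Gm by simp
  also have "\<dots> \<le> (1 - \<eta>*\<mu>) * norm (y - m)" by (rule Qp_contract[OF Q mu eta])
  also have "\<dots> \<le> (1 - \<eta>*\<mu>) * ((1 - \<eta>*\<mu>)^n * norm (w - m))"
    using Suc.IH eta unfolding y_def by (intro mult_left_mono) auto
  finally show ?case by simp
qed

theorem proposition3:
  fixes f :: "nat \<Rightarrow> 'a::euclidean_space \<Rightarrow> real"
    and g :: "nat \<Rightarrow> 'a \<Rightarrow> 'a"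
    and \<mu> L C \<gamma> \<eta> \<epsilon> :: real and E :: nat and w0 :: 'a
  assumes "0 < \<mu>" "\<mu> \<le> L" "C > 0" "0 < \<gamma>" "\<gamma> < 1"
    and grad: "\<And>t x. t \<ge> 1 \<Longrightarrow> (f t has_derivative (\<lambda>h. inner (g t x) h)) (at x)"
    and smooth: "\<And>t. t \<ge> 1 \<Longrightarrow> smooth_grad L (g t)"
    and sconv: "\<And>t. t \<ge> 1 \<Longrightarrow> strongly_convex_grad \<mu> (f t) (g t)"
    and minbd: "\<And>t w. t \<ge> 1 \<Longrightarrow> (\<forall>v. f t w \<le> f t v) \<Longrightarrow> norm w \<le> C"
    and "0 < \<eta>" "\<eta> \<le> 2 / (\<mu> + L)" "\<eta> * \<mu> < 1"
    and "E \<ge> 1"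
    and "\<epsilon> > 0"
    and Ebd: "real E \<ge> ln (\<epsilon> / ((1 + sqrt (L / \<mu>)) * (L * C / \<mu>) * (1 - \<gamma>) + \<epsilon>))
                        / ln (1 - \<eta> * \<mu>)"
  shows "(limsup (\<lambda>t. ereal (norm (iter_w \<gamma> g \<eta> E w0 t - argmin (Fdisc \<gamma> f t))))
           \<le> ereal \<epsilon>) \<and>
         ((\<lambda>e. ln (e / ((1 + sqrt (L / \<mu>)) * (L * C / \<mu>) * (1 - \<gamma>) + e)) / ln (1 - \<eta> * \<mu>))
           \<in> bigo (at_right (0::real)) (\<lambda>e. ln (1 / e)))"
proof -
  note mu = assms(1,2)
  note eta = assms(10,11,12)
  have C0: "C > 0" and g0: "0 < \<gamma>" and g1: "\<gamma> < 1" and E1: "E \<ge> 1" and eps: "\<epsilon> > 0"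
    using assms by auto
  define C' where "C' = (1 + sqrt (L / \<mu>)) * (L * C / \<mu>)"
  define K where "K = C' * (1 - \<gamma>)"
  have C'0: "C' > 0"
  proof -
    have "L > 0" using mu by simp
    then have "L*C/\<mu> > 0" using mu C0 by simp
    moreover have "sqrt (L/\<mu>) \<ge> 0" using mu by simp
    then have "1 + sqrt (L/\<mu>) > 0" by linarith
    ultimately show ?thesis unfolding C'_def by (rule mult_pos_pos[rotated])
  qed
  have K0: "K > 0" unfolding K_def using C'0 g1 by simp
  have Qf: "Qp \<mu> L (f t) (g t)" if t: "t \<ge> 1" for t
    unfolding Qp_def
    using sconv[OF t] descent[OF grad[OF t] smooth[OF t]]
    unfolding strongly_convex_grad_def by (auto simp: algebra_simps)
  define wt where "wt t i = (1-\<gamma>)/(1-\<gamma>^t)*\<gamma>^(t-i)" for t i :: nat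
  have Fd: "Fdisc \<gamma> f t = (\<lambda>w. \<Sum>i\<in>{1..t}. wt t i * f i w)" for t
    by (simp add: fun_eq_iff Fdisc_def wt_def)
  have Gd: "gradF \<gamma> g t = (\<lambda>w. \<Sum>i\<in>{1..t}. wt t i *\<^sub>R g i w)" for t
    by (simp add: fun_eq_iff gradF_def wt_def)
  have gt1: "\<gamma>^t \<le> 1" for t :: nat using g0 g1 by (simp add: power_le_one)
  have wnn: "wt t i \<ge> 0" for t i unfolding wt_def using g0 g1 gt1[of t] by simp
  have wsum: "(\<Sum>i\<in>{1..t}. wt t i) = 1" if "t \<ge> 1" for t
    unfolding wt_def using weights_sum[OF g0 g1 that] by simp
  have QF: "Qp \<mu> L (Fdisc \<gamma> f t) (gradF \<gamma> g t)" if t: "t \<ge> 1" for t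
    unfolding Fd Gd by (rule Qp_sum) (use wnn wsum[OF t] Qf in auto)
  define z where "z t = (SOME m. g t m = 0 \<and> (\<forall>v. f t m \<le> f t v))" for t
  have zp: "g t (z t) = 0 \<and> norm (z t) \<le> C" if t: "t \<ge> 1" for t
  proof -
    have "\<exists>m. g t m = 0 \<and> (\<forall>v. f t m \<le> f t v)" using Qp_argmin[OF Qf[OF t] mu] by blast
    then have "g t (z t) = 0 \<and> (\<forall>v. f t (z t) \<le> f t v)" unfolding z_def by (rule someI_ex)
    then show ?thesis using minbd[OF t] by blast
  qed
  define m where "m t = argmin (Fdisc \<gamma> f t)" for t
  have mp: "gradF \<gamma> g t (m t) = 0 \<and> (\<forall>v. Fdisc \<gamma> f t (m t) \<le> Fdisc \<gamma> f t v)" if t: "t \<ge> 1" for t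
    using Qp_argmin[OF QF[OF t] mu] unfolding m_def by blast
  have mnorm: "norm (m t) \<le> sqrt (L/\<mu>) * C" if t: "t \<ge> 1" for t
  proof -
    have "\<mu> * (norm (m t))^2 \<le> L * C^2"
    proof (rule min_norm[of "{1..t}" "wt t" \<mu> L f g z])
      show "\<And>v. (\<Sum>i\<in>{1..t}. wt t i * f i (m t)) \<le> (\<Sum>i\<in>{1..t}. wt t i * f i v)"
        using mp[OF t] unfolding Fd by simp
    qed (use wnn wsum[OF t] Qf zp mu in auto)
    then have "(norm (m t))^2 \<le> (L/\<mu>) * C^2" using mu by (simp add: field_simps)
    then have "sqrt ((norm (m t))^2) \<le> sqrt ((L/\<mu>) * C^2)" by (rule real_sqrt_le_mono)
    moreover have "sqrt ((L/\<mu>) * C^2) = sqrt (L/\<mu>) * C" using C0 by (subst real_sqrt_mult) simp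
    ultimately show ?thesis by simp
  qed
  define \<alpha> where "\<alpha> t = (1-\<gamma>)/(1-\<gamma>^(Suc t))" for t
  have a0: "\<alpha> t \<ge> 0" for t unfolding \<alpha>_def using g1 gt1[of "Suc t"] by simp
  have decomp: "gradF \<gamma> g (Suc t) x = (\<gamma>*(1-\<gamma>^t)/(1-\<gamma>^(Suc t))) *\<^sub>R gradF \<gamma> g t x + \<alpha> t *\<^sub>R g (Suc t) x"
    if t: "t \<ge> 1" for t x
  proof -
    have nz: "1 - \<gamma>^t \<noteq> 0" "1 - \<gamma>^(Suc t) \<noteq> 0"
      using g0 g1 t by (simp_all add: power_less_one_iff less_imp_neq[symmetric] del: power_Suc)
    have "gradF \<gamma> g (Suc t) x = (\<Sum>i\<in>{1..t}. wt (Suc t) i *\<^sub>R g i x) + wt (Suc t) (Suc t) *\<^sub>R g (Suc t) x"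
      unfolding Gd by simp
    also have "wt (Suc t) (Suc t) = \<alpha> t" unfolding wt_def \<alpha>_def by simp
    also have "(\<Sum>i\<in>{1..t}. wt (Suc t) i *\<^sub>R g i x) = (\<gamma>*(1-\<gamma>^t)/(1-\<gamma>^(Suc t))) *\<^sub>R gradF \<gamma> g t x"
      unfolding Gd scaleR_sum_right scaleR_scaleR
    proof (rule sum.cong)
      fix i assume "i \<in> {1..t}"
      then have "Suc t - i = Suc (t - i)" by auto
      then have w1: "wt (Suc t) i = (1-\<gamma>)/(1-\<gamma>^(Suc t)) * (\<gamma> * \<gamma>^(t-i))" unfolding wt_def by simp
      have w2: "wt t i = (1-\<gamma>)/(1-\<gamma>^t)*\<gamma>^(t-i)" by (simp add: wt_def)
      have gen: "\<And>a B p. a \<noteq> 0 \<Longrightarrow> B \<noteq> 0 \<Longrightarrow> (1-\<gamma>)/B*(\<gamma>*p) = \<gamma>*a/B*((1-\<gamma>)/a*p)"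
        by (simp add: field_simps)
      have "wt (Suc t) i = \<gamma>*(1-\<gamma>^t)/(1-\<gamma>^(Suc t)) * wt t i"
        unfolding w1 w2 by (rule gen[OF nz])
      then show "wt (Suc t) i *\<^sub>R g i x = (\<gamma>*(1-\<gamma>^t)/(1-\<gamma>^(Suc t)) * wt t i) *\<^sub>R g i x"
        by simp
    qed simp
    finally show ?thesis by simp
  qed
  have drift: "norm (m t - m (Suc t)) \<le> \<alpha> t * C'" if t: "t \<ge> 1" for t
  proof -
    define D where "D = m t - m (Suc t)"
    have t1: "Suc t \<ge> 1" by simp
    have "\<mu> * (norm D)^2 \<le> inner (gradF \<gamma> g (Suc t) (m t) - gradF \<gamma> g (Suc t) (m (Suc t))) D"
      unfolding D_def by (rule Qp_mono[OF QF[OF t1]])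
    also have "gradF \<gamma> g (Suc t) (m t) - gradF \<gamma> g (Suc t) (m (Suc t)) = \<alpha> t *\<^sub>R g (Suc t) (m t)"
      using decomp[OF t, of "m t"] mp[OF t] mp[OF t1] by simp
    also have "inner (\<alpha> t *\<^sub>R g (Suc t) (m t)) D \<le> \<alpha> t * (norm (g (Suc t) (m t)) * norm D)"
      using a0[of t] norm_cauchy_schwarz[of "g (Suc t) (m t)" D] by (simp add: mult_left_mono)
    finally have i1: "\<mu> * (norm D)^2 \<le> \<alpha> t * (norm (g (Suc t) (m t)) * norm D)" .
    have "norm (g (Suc t) (m t)) = norm (g (Suc t) (m t) - g (Suc t) (z (Suc t)))" using zp[OF t1] by simp
    also have "\<dots> \<le> L * norm (m t - z (Suc t))" using smooth[OF t1] unfolding smooth_grad_def by blast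
    also have "\<dots> \<le> L * (norm (m t) + norm (z (Suc t)))"
      using mu by (intro mult_left_mono norm_triangle_ineq4) auto
    also have "\<dots> \<le> L * (sqrt (L/\<mu>) * C + C)"
      using mu mnorm[OF t] zp[OF t1] by (intro mult_left_mono add_mono) auto
    finally have gb: "norm (g (Suc t) (m t)) \<le> L * (sqrt (L/\<mu>) * C + C)" .
    have "\<mu> * norm D \<le> \<alpha> t * (L * (sqrt (L/\<mu>) * C + C))"
    proof (cases "norm D = 0")
      case True then show ?thesis using a0[of t] mu C0 by simp
    next
      case False
      then have pD: "norm D > 0" by simp
      have "\<mu> * norm D * norm D \<le> \<alpha> t * norm (g (Suc t) (m t)) * norm D"
        using i1 by (simp add: power2_eq_square algebra_simps)
      then have "\<mu> * norm D \<le> \<alpha> t * norm (g (Suc t) (m t))" using pD by simp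
      also have "\<dots> \<le> \<alpha> t * (L * (sqrt (L/\<mu>) * C + C))" using gb a0[of t] by (rule mult_left_mono)
      finally show ?thesis .
    qed
    then have "norm D \<le> \<alpha> t * (L * (sqrt (L/\<mu>) * C + C)) / \<mu>" using mu by (simp add: field_simps)
    also have "\<dots> = \<alpha> t * C'" unfolding C'_def using mu by (simp add: field_simps)
    finally show ?thesis unfolding D_def .
  qed
  define q where "q = 1 - \<eta>*\<mu>"
  define \<rho> where "\<rho> = q^E"
  have q: "0 < q" "q < 1" unfolding q_def using eta mu by auto
  have r: "0 \<le> \<rho>" "\<rho> < 1"
  proof -
    show "0 \<le> \<rho>" unfolding \<rho>_def using q by simp
    have "q^E \<le> q^1" by (rule power_decreasing) (use E1 q in auto)
    then show "\<rho> < 1" unfolding \<rho>_def using q by simp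
  qed
  define e where "e t = norm (iter_w \<gamma> g \<eta> E w0 t - m t)" for t
  define d where "d t = norm (m t - m (Suc t))" for t
  have rec: "e (Suc t) \<le> \<rho> * (e t + d t)" for t
  proof -
    have t1: "Suc t \<ge> 1" by simp
    have "e (Suc t) \<le> \<rho> * norm (iter_w \<gamma> g \<eta> E w0 t - m (Suc t))"
      unfolding e_def \<rho>_def q_def iter_w.simps
      by (rule pow_contract[OF QF[OF t1] mu eta]) (use mp[OF t1] in blast)
    also have "norm (iter_w \<gamma> g \<eta> E w0 t - m (Suc t)) \<le> e t + d t"
      unfolding e_def d_def using norm_triangle_ineq[of "iter_w \<gamma> g \<eta> E w0 t - m t" "m t - m (Suc t)"] by simp
    then have "\<rho> * norm (iter_w \<gamma> g \<eta> E w0 t - m (Suc t)) \<le> \<rho> * (e t + d t)"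
      by (rule mult_left_mono[OF _ r(1)])
    finally show ?thesis .
  qed
  have alim: "(\<lambda>t. \<alpha> t * C') \<longlonglongrightarrow> (1-\<gamma>)/(1-0) * C'"
    unfolding \<alpha>_def
    by (intro tendsto_intros LIMSEQ_Suc[OF LIMSEQ_power_zero]) (use g0 g1 in auto)
  have dv: "eventually (\<lambda>t. d t \<le> K + \<delta>) sequentially" if dp: "\<delta> > 0" for \<delta>
  proof -
    have "eventually (\<lambda>t. \<alpha> t * C' < K + \<delta>) sequentially"
      using order_tendstoD(2)[OF alim, of "K + \<delta>"] dp unfolding K_def by (simp add: mult.commute)
    moreover have "eventually (\<lambda>t. t \<ge> 1) sequentially" by (rule eventually_ge_at_top)
    ultimately show ?thesis
      by eventually_elim (use drift in \<open>fastforce simp: d_def\<close>)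
  qed
  have lq: "ln q < 0" using q by simp
  have "real E * ln q \<le> ln (\<epsilon> / (K + \<epsilon>))"
    using Ebd lq unfolding q_def[symmetric] K_def C'_def by (simp add: divide_le_eq)
  then have "ln \<rho> \<le> ln (\<epsilon> / (K + \<epsilon>))" unfolding \<rho>_def using q by (simp add: ln_realpow)
  then have rle: "\<rho> \<le> \<epsilon> / (K + \<epsilon>)" using q eps K0 unfolding \<rho>_def by simp
  have rK: "\<rho>*K/(1-\<rho>) \<le> \<epsilon>"
  proof -
    have "\<rho> * (K + \<epsilon>) \<le> \<epsilon>" using rle K0 eps by (simp add: field_simps)
    then have "\<rho> * K \<le> \<epsilon> * (1 - \<rho>)" by (simp add: algebra_simps)
    then show ?thesis using r by (simp add: field_simps)
  qed
  have part1: "limsup (\<lambda>t. ereal (e t)) \<le> ereal \<epsilon>"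
  proof (rule ereal_le_epsilon2)
    fix \<delta> :: real assume dp: "0 < \<delta>"
    have "eventually (\<lambda>t. e t \<le> \<rho>*K/(1-\<rho>) + \<delta>) sequentially"
      by (rule rec_bound[OF r rec dv dp]) (use K0 in auto)
    then have "eventually (\<lambda>t. ereal (e t) \<le> ereal \<epsilon> + ereal \<delta>) sequentially"
      by eventually_elim (use rK in simp)
    then show "limsup (\<lambda>t. ereal (e t)) \<le> ereal \<epsilon> + ereal \<delta>" by (rule Limsup_bounded)
  qed
  have part2: "(\<lambda>e. ln (e / ((1 + sqrt (L / \<mu>)) * (L * C / \<mu>) * (1 - \<gamma>) + e)) / ln (1 - \<eta> * \<mu>))
           \<in> bigo (at_right (0::real)) (\<lambda>e. ln (1 / e))"
    by (rule bigo_part) (use K0 in \<open>simp add: K_def C'_def\<close>)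
  show ?thesis using part1 part2 unfolding e_def m_def by simp
qed


end
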